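(* Let $n\geq 1$. The classes $\alpha^{\mathrm{sgn}}_{\mathcal D}=\frac{1}{|\mathrm{Stab}_{S_n}(\Delta_{\mathcal D})|}\sum_{\sigma\in S_n}\sigma(\mu_{\Delta_{\mathcal D}})\in H^{|E\mathcal D|}(\mathbb{Z}\mathcal{A}_n;\mathbb{Q}_{\mathrm{sgn}})$, for $\mathcal D$ ranging over $\mathcal{D}^{\mathrm{sgn}}_n$, form a basis of $H^\bullet(\Gamma_n;\mathbb{Q}_{\mathrm{sgn}})$, identified with the subspace $H^\bullet(\mathbb{Z}\mathcal{A}_n;\mathbb{Q}_{\mathrm{sgn}})^{S_n}$ of $H^\bullet(\mathbb{Z}\mathcal{A}_n;\mathbb{Q}_{\mathrm{sgn}})$.
   Context: $\mathrm{Br}_n$ is the braid group on $n$ strands, $P_n$ the pure braid group, $\Gamma_n=\mathrm{Br}_n/[P_n,P_n]$, $\mathbb{Z}\mathcal{A}_n=P_n/[P_n,P_n]$, normal in $\Gamma_n$ with quotient $S_n$. $\mathbb{Q}_{\mathrm{sgn}}$ is the sign representation of $S_n$ viewed as a $\Gamma_n$-module (trivial on $\mathbb{Z}\mathcal A_n$); $H^\bullet(\Gamma_n;\mathbb{Q}_{\mathrm{sgn}})$ is identified via restriction with $H^\bullet(\mathbb{Z}\mathcal{A}_n;\mathbb{Q}_{\mathrm{sgn}})^{S_n}$. As $S_n$-module $H^\bullet(\mathbb{Z}\mathcal{A}_n;\mathbb{Q}_{\mathrm{sgn}})=\mathbb{Q}_{\mathrm{sgn}}\otimes\Lambda^\bullet$,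 where $\Lambda^\bullet=H^\bullet(\mathbb{Z}\mathcal A_n;\mathbb{Q})$ is the exterior algebra on $\omega_{ij}$ ($1\le i<j\le n$) with $\sigma(\omega_{ij})=\omega_{\sigma(i)\sigma(j)}$ if $\sigma(i)<\sigma(j)$, $\omega_{\sigma(j)\sigma(i)}$ otherwise. For a graph $\Delta$ on $\{1,\dots,n\}$ with lexicographically ordered edges $(i_1,j_1),\dots,(i_k,j_k)$, $\mu_\Delta=\omega_{i_1j_1}\cdots\omega_{i_kj_k}$; in twisted coefficients $\sigma(\mu_\Delta)=\mathrm{sgn}(\sigma)\mathrm{sgn}_\Delta(\sigma)\mu_{\sigma(\Delta)}$, where $\mathrm{sgn}_\Delta(\sigma)$ is the sign of the bijection induced by $\sigma$ between the ordered edge lists of $\Delta$ and $\sigma(\Delta)$. A graph $\Delta$ with $n$ vertices is skew-invariant if every automorphism $\sigma$ satisfies $\mathrm{sgn}(\sigma)\mathrm{sgn}_\Delta(\sigma)=1$ ($\mathrm{sgn}(\sigma)$ the sign on vertices, $\mathrm{sgn}_\Delta(\sigma)$ the sign on edges). $\mathcal D^{\mathrm{sgn}}_n$ is the set of isomorphism classes of skew-invariant graphs with exactly $n$ vertices, with a fixed representative $\Delta_{\mathcal D}\subset K_n$ for each; $|E\mathcal D|$ is the number of edges. *)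

theory Defs
  imports Complex_Main "HOL-Combinatorics.Permutations" "HOL-Library.Product_Lexorder"
begin

(* Vertices are 1..n; an edge of K_n is a pair (i,j) with 1 <= i < j <= n;
   a graph on {1..n} is a set of such edges. *)
definition Kn_edges :: "nat \<Rightarrow> (nat \<times> nat) set" where
  "Kn_edges n = {(i,j). 1 \<le> i \<and> i < j \<and> j \<le> n}"

definition Sn :: "nat \<Rightarrow> (nat \<Rightarrow> nat) set" where
  "Sn n = {\<sigma>. \<sigma> permutes {1..n}}"

definition eact :: "(nat \<Rightarrow> nat) \<Rightarrow> nat \<times> nat \<Rightarrow> nat \<times> nat" where
  "eact \<sigma> e = (min (\<sigma> (fst e)) (\<sigma> (snd e)), max (\<sigma> (fst e)) (\<sigma> (snd e)))"

definition gimg :: "(nat \<Rightarrow> nat) \<Rightarrow> (nat \<times> nat) set \<Rightarrow> (nat \<times> nat) set" where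
  "gimg \<sigma> \<Delta> = eact \<sigma> ` \<Delta>"

(* the bijection induced by sigma between the lexicographically ordered edge lists
   of Delta and sigma(Delta), as a permutation of positions {0..<|Delta|} *)
definition edge_perm :: "(nat \<Rightarrow> nat) \<Rightarrow> (nat \<times> nat) set \<Rightarrow> nat \<Rightarrow> nat" where
  "edge_perm \<sigma> \<Delta> i =
     (let xs = sorted_list_of_set \<Delta>; ys = sorted_list_of_set (gimg \<sigma> \<Delta>) in
      if i < length xs then (THE j. j < length ys \<and> ys ! j = eact \<sigma> (xs ! i)) else i)"

definition sgnE :: "(nat \<Rightarrow> nat) \<Rightarrow> (nat \<times> nat) set \<Rightarrow> int" where
  "sgnE \<sigma> \<Delta> = sign (edge_perm \<sigma> \<Delta>)"

(* Elements of H^*(ZA_n; Q_sgn) = Q_sgn (x) Lambda^*: coefficient functions on the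
   monomial basis mu_Delta, Delta ranging over graphs Delta \<subseteq> K_n. *)
definition Hspace :: "nat \<Rightarrow> ((nat \<times> nat) set \<Rightarrow> rat) set" where
  "Hspace n = {v. \<forall>\<Delta>. v \<Delta> \<noteq> 0 \<longrightarrow> \<Delta> \<subseteq> Kn_edges n}"

definition mu :: "(nat \<times> nat) set \<Rightarrow> (nat \<times> nat) set \<Rightarrow> rat" where
  "mu \<Delta> = (\<lambda>\<Gamma>. if \<Gamma> = \<Delta> then 1 else 0)"

(* twisted action: sigma(mu_Delta) = sgn(sigma) sgn_Delta(sigma) mu_{sigma(Delta)}, extended linearly *)
definition act :: "nat \<Rightarrow> (nat \<Rightarrow> nat) \<Rightarrow> ((nat \<times> nat) set \<Rightarrow> rat) \<Rightarrow> ((nat \<times> nat) set \<Rightarrow> rat)" where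
  "act n \<sigma> v = (\<lambda>\<Gamma>. \<Sum>\<Delta>\<in>Pow (Kn_edges n).
       if gimg \<sigma> \<Delta> = \<Gamma> then of_int (sign \<sigma> * sgnE \<sigma> \<Delta>) * v \<Delta> else 0)"

definition invariants :: "nat \<Rightarrow> ((nat \<times> nat) set \<Rightarrow> rat) set" where
  "invariants n = {v \<in> Hspace n. \<forall>\<sigma>\<in>Sn n. act n \<sigma> v = v}"

definition skew_invariant :: "nat \<Rightarrow> (nat \<times> nat) set \<Rightarrow> bool" where
  "skew_invariant n \<Delta> \<longleftrightarrow> \<Delta> \<subseteq> Kn_edges n \<and>
     (\<forall>\<sigma>\<in>Sn n. gimg \<sigma> \<Delta> = \<Delta> \<longrightarrow> sign \<sigma> * sgnE \<sigma> \<Delta> = 1)"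

definition graph_iso :: "nat \<Rightarrow> (nat \<times> nat) set \<Rightarrow> (nat \<times> nat) set \<Rightarrow> bool" where
  "graph_iso n \<Delta> \<Delta>' \<longleftrightarrow> (\<exists>\<sigma>\<in>Sn n. gimg \<sigma> \<Delta> = \<Delta>')"

definition stab :: "nat \<Rightarrow> (nat \<times> nat) set \<Rightarrow> (nat \<Rightarrow> nat) set" where
  "stab n \<Delta> = {\<sigma>\<in>Sn n. gimg \<sigma> \<Delta> = \<Delta>}"

definition alpha :: "nat \<Rightarrow> (nat \<times> nat) set \<Rightarrow> (nat \<times> nat) set \<Rightarrow> rat" where
  "alpha n \<Delta> = (\<lambda>\<Gamma>. (1 / of_nat (card (stab n \<Delta>))) * (\<Sum>\<sigma>\<in>Sn n. act n \<sigma> (mu \<Delta>) \<Gamma>))"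

definition sgn_reps :: "nat \<Rightarrow> (nat \<times> nat) set set \<Rightarrow> bool" where
  "sgn_reps n R \<longleftrightarrow> (\<forall>\<Delta>\<in>R. skew_invariant n \<Delta>) \<and>
     (\<forall>\<Delta>. skew_invariant n \<Delta> \<longrightarrow> (\<exists>\<Delta>'\<in>R. graph_iso n \<Delta> \<Delta>')) \<and>
     (\<forall>\<Delta>\<in>R. \<forall>\<Delta>'\<in>R. graph_iso n \<Delta> \<Delta>' \<longrightarrow> \<Delta> = \<Delta>')"

end

theory Submission
  imports Defs
begin

lemma eact_comp: "eact (\<sigma> \<circ> \<tau>) e = eact \<sigma> (eact \<tau> e)"
  by (cases "\<tau> (fst e) \<le> \<tau> (snd e)") (auto simp: eact_def min_def max_def)

lemma gimg_comp: "gimg (\<sigma> \<circ> \<tau>) \<Delta> = gimg \<sigma> (gimg \<tau> \<Delta>)"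
  unfolding gimg_def by (auto simp: eact_comp image_image)

lemma finite_Kn: "finite (Kn_edges n)"
  by (rule finite_subset[of _ "{1..n} \<times> {1..n}"]) (auto simp: Kn_edges_def)

lemma Sn_perm: "\<sigma> \<in> Sn n \<Longrightarrow> \<sigma> permutes {1..n}" by (simp add: Sn_def)

lemma eact_Kn: assumes "\<sigma> \<in> Sn n" "e \<in> Kn_edges n" shows "eact \<sigma> e \<in> Kn_edges n"
proof -
  obtain a b where e: "e = (a,b)" "1 \<le> a" "a < b" "b \<le> n" using assms(2) by (auto simp: Kn_edges_def)
  have p: "\<sigma> permutes {1..n}" using assms(1) by (simp add: Sn_def)
  have ab: "a \<in> {1..n}" "b \<in> {1..n}" using e by auto
  have "\<sigma> a \<in> {1..n}" "\<sigma> b \<in> {1..n}" by (simp_all only: permutes_in_image[OF p] ab)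
  moreover have "\<sigma> a \<noteq> \<sigma> b" using e permutes_inj[OF p] by (metis inj_eq less_irrefl)
  ultimately show ?thesis using e by (auto simp: eact_def Kn_edges_def min_def max_def)
qed

lemma eact_inj: assumes "\<sigma> \<in> Sn n" shows "inj_on (eact \<sigma>) (Kn_edges n)"
proof
  fix x y assume x: "x \<in> Kn_edges n" and y: "y \<in> Kn_edges n" and eq: "eact \<sigma> x = eact \<sigma> y"
  have inj: "inj \<sigma>" using assms permutes_inj by (auto simp: Sn_def)
  obtain a b where xa: "x = (a,b)" "a < b" using x by (auto simp: Kn_edges_def)
  obtain c d where yc: "y = (c,d)" "c < d" using y by (auto simp: Kn_edges_def)
  have "{\<sigma> a, \<sigma> b} = {\<sigma> c, \<sigma> d}" using eq xa yc
    by (auto simp: eact_def min_def max_def split: if_splits)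
  then have "\<sigma> ` {a,b} = \<sigma> ` {c,d}" by simp
  then have "{a,b} = {c,d}" using inj by (simp only: inj_image_eq_iff)
  then show "x = y" using xa yc by (auto simp: doubleton_eq_iff)
qed

lemma gimg_Kn: "\<sigma> \<in> Sn n \<Longrightarrow> \<Delta> \<subseteq> Kn_edges n \<Longrightarrow> gimg \<sigma> \<Delta> \<subseteq> Kn_edges n"
  using eact_Kn by (auto simp: gimg_def)

lemma card_gimg: "\<sigma> \<in> Sn n \<Longrightarrow> \<Delta> \<subseteq> Kn_edges n \<Longrightarrow> card (gimg \<sigma> \<Delta>) = card \<Delta>"
  unfolding gimg_def by (meson card_image eact_inj inj_on_subset)

lemma gimg_id: "\<Delta> \<subseteq> Kn_edges n \<Longrightarrow> gimg id \<Delta> = \<Delta>"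
proof -
  assume "\<Delta> \<subseteq> Kn_edges n"
  then have "\<forall>e\<in>\<Delta>. eact id e = e" by (auto simp: eact_def Kn_edges_def)
  then show ?thesis unfolding gimg_def by simp
qed

lemma id_Sn: "id \<in> Sn n" by (simp add: Sn_def permutes_id)
lemma inv_Sn: "\<sigma> \<in> Sn n \<Longrightarrow> inv \<sigma> \<in> Sn n" by (simp add: Sn_def permutes_inv)
lemma comp_Sn: "\<sigma> \<in> Sn n \<Longrightarrow> \<tau> \<in> Sn n \<Longrightarrow> \<sigma> \<circ> \<tau> \<in> Sn n" by (simp add: Sn_def permutes_compose)
lemma finite_Sn: "finite (Sn n)" unfolding Sn_def by (simp add: finite_permutations)

lemma gimg_inv1: "\<sigma> \<in> Sn n \<Longrightarrow> \<Delta> \<subseteq> Kn_edges n \<Longrightarrow> gimg (inv \<sigma>) (gimg \<sigma> \<Delta>) = \<Delta>"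
  by (metis gimg_comp gimg_id Sn_perm permutes_inv_o(2))
lemma gimg_inv2: "\<sigma> \<in> Sn n \<Longrightarrow> \<Delta> \<subseteq> Kn_edges n \<Longrightarrow> gimg \<sigma> (gimg (inv \<sigma>) \<Delta>) = \<Delta>"
  by (metis gimg_comp gimg_id Sn_perm permutes_inv_o(1))


lemma ep_char:
  assumes fin: "finite \<Delta>" and inj: "inj_on (eact \<sigma>) \<Delta>" and i: "i < card \<Delta>"
  shows "edge_perm \<sigma> \<Delta> i < card \<Delta> \<and>
    sorted_list_of_set (gimg \<sigma> \<Delta>) ! edge_perm \<sigma> \<Delta> i = eact \<sigma> (sorted_list_of_set \<Delta> ! i)"
proof -
  define xs where "xs = sorted_list_of_set \<Delta>"
  define ys where "ys = sorted_list_of_set (gimg \<sigma> \<Delta>)"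
  have lx: "length xs = card \<Delta>" by (simp add: xs_def)
  have cg: "card (gimg \<sigma> \<Delta>) = card \<Delta>" using inj by (simp add: gimg_def card_image)
  have ly: "length ys = card \<Delta>" by (simp add: ys_def cg)
  have dy: "distinct ys" by (simp add: ys_def)
  have sy: "set ys = gimg \<sigma> \<Delta>" using fin by (simp add: ys_def gimg_def)
  have sx: "set xs = \<Delta>" using fin by (simp add: xs_def)
  have mem: "eact \<sigma> (xs ! i) \<in> set ys" using i lx sx sy by (auto simp: gimg_def)
  have ex1: "\<exists>!j. j < length ys \<and> ys ! j = eact \<sigma> (xs ! i)"
  proof -
    obtain j where "j < length ys" "ys ! j = eact \<sigma> (xs ! i)" using mem by (auto simp: in_set_conv_nth)
    moreover have "\<And>j'. j' < length ys \<Longrightarrow> ys ! j' = eact \<sigma> (xs ! i) \<Longrightarrow> j' = j"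
      using calculation dy by (metis nth_eq_iff_index_eq)
    ultimately show ?thesis by blast
  qed
  have "edge_perm \<sigma> \<Delta> i = (THE j. j < length ys \<and> ys ! j = eact \<sigma> (xs ! i))"
    using i lx by (simp add: edge_perm_def Let_def xs_def ys_def)
  with theI'[OF ex1] show ?thesis using ly by (simp add: xs_def ys_def)
qed

lemma ep_unique:
  assumes fin: "finite \<Delta>" and inj: "inj_on (eact \<sigma>) \<Delta>" and i: "i < card \<Delta>"
    and j: "j < card \<Delta>" and eq: "sorted_list_of_set (gimg \<sigma> \<Delta>) ! j = eact \<sigma> (sorted_list_of_set \<Delta> ! i)"
  shows "edge_perm \<sigma> \<Delta> i = j"
proof -
  have cg: "card (gimg \<sigma> \<Delta>) = card \<Delta>" using inj by (simp add: gimg_def card_image)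
  have "distinct (sorted_list_of_set (gimg \<sigma> \<Delta>))" by simp
  moreover have "length (sorted_list_of_set (gimg \<sigma> \<Delta>)) = card \<Delta>" using cg by simp
  ultimately show ?thesis using ep_char[OF fin inj i] j eq by (metis nth_eq_iff_index_eq)
qed

lemma ep_out: "\<not> i < card \<Delta> \<Longrightarrow> edge_perm \<sigma> \<Delta> i = i"
  by (simp add: edge_perm_def Let_def)

lemma ep_permutes:
  assumes fin: "finite \<Delta>" and inj: "inj_on (eact \<sigma>) \<Delta>"
  shows "edge_perm \<sigma> \<Delta> permutes {..<card \<Delta>}"
proof (rule bij_imp_permutes)
  let ?f = "edge_perm \<sigma> \<Delta>"
  define xs where "xs = sorted_list_of_set \<Delta>"
  have lx: "length xs = card \<Delta>" by (simp add: xs_def)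
  have dx: "distinct xs" by (simp add: xs_def)
  have sx: "set xs = \<Delta>" using fin by (simp add: xs_def)
  have injf: "inj_on ?f {..<card \<Delta>}"
  proof
    fix i i' assume i: "i \<in> {..<card \<Delta>}" and i': "i' \<in> {..<card \<Delta>}" and eq: "?f i = ?f i'"
    have "eact \<sigma> (xs ! i) = eact \<sigma> (xs ! i')"
      using ep_char[OF fin inj, of i] ep_char[OF fin inj, of i'] i i' eq by (simp add: xs_def)
    moreover have "xs ! i \<in> \<Delta>" "xs ! i' \<in> \<Delta>" using i i' lx sx by auto
    ultimately have "xs ! i = xs ! i'" using inj by (meson inj_onD)
    then show "i = i'" using dx i i' lx by (simp add: nth_eq_iff_index_eq)
  qed
  have sub: "?f ` {..<card \<Delta>} \<subseteq> {..<card \<Delta>}" using ep_char[OF fin inj] by auto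
  have "?f ` {..<card \<Delta>} = {..<card \<Delta>}" using endo_inj_surj[OF _ sub injf] by simp
  then show "bij_betw ?f {..<card \<Delta>} {..<card \<Delta>}" using injf by (simp add: bij_betw_def)
  show "\<And>x. x \<notin> {..<card \<Delta>} \<Longrightarrow> ?f x = x" using ep_out by auto
qed

lemma ep_comp:
  assumes s: "\<sigma> \<in> Sn n" and t: "\<tau> \<in> Sn n" and D: "\<Delta> \<subseteq> Kn_edges n"
  shows "edge_perm (\<tau> \<circ> \<sigma>) \<Delta> = edge_perm \<tau> (gimg \<sigma> \<Delta>) \<circ> edge_perm \<sigma> \<Delta>"
proof
  fix i
  have fin: "finite \<Delta>" using D finite_Kn finite_subset by blast
  have G: "gimg \<sigma> \<Delta> \<subseteq> Kn_edges n" using gimg_Kn[OF s D] .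
  have fin2: "finite (gimg \<sigma> \<Delta>)" using G finite_Kn finite_subset by blast
  have inj1: "inj_on (eact \<sigma>) \<Delta>" using eact_inj[OF s] D inj_on_subset by blast
  have inj2: "inj_on (eact \<tau>) (gimg \<sigma> \<Delta>)" using eact_inj[OF t] G inj_on_subset by blast
  have inj3: "inj_on (eact (\<tau> \<circ> \<sigma>)) \<Delta>" using eact_inj[OF comp_Sn[OF t s]] D inj_on_subset by blast
  have cg: "card (gimg \<sigma> \<Delta>) = card \<Delta>" using card_gimg[OF s D] .
  show "edge_perm (\<tau> \<circ> \<sigma>) \<Delta> i = (edge_perm \<tau> (gimg \<sigma> \<Delta>) \<circ> edge_perm \<sigma> \<Delta>) i"
  proof (cases "i < card \<Delta>")
    case False
    then show ?thesis using ep_out[of i \<Delta>] ep_out[of i "gimg \<sigma> \<Delta>"] cg by simp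
  next
    case True
    define j where "j = edge_perm \<sigma> \<Delta> i"
    have j: "j < card \<Delta>" "sorted_list_of_set (gimg \<sigma> \<Delta>) ! j = eact \<sigma> (sorted_list_of_set \<Delta> ! i)"
      using ep_char[OF fin inj1 True] by (simp_all add: j_def)
    have k: "edge_perm \<tau> (gimg \<sigma> \<Delta>) j < card \<Delta>"
      "sorted_list_of_set (gimg \<tau> (gimg \<sigma> \<Delta>)) ! edge_perm \<tau> (gimg \<sigma> \<Delta>) j
        = eact \<tau> (sorted_list_of_set (gimg \<sigma> \<Delta>) ! j)"
      using ep_char[OF fin2 inj2, of j] j(1) cg by simp_all
    have "edge_perm (\<tau> \<circ> \<sigma>) \<Delta> i = edge_perm \<tau> (gimg \<sigma> \<Delta>) j"
      apply (rule ep_unique[OF fin inj3 True k(1)])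
      using k(2) j(2) by (simp add: gimg_comp eact_comp)
    then show ?thesis by (simp add: j_def)
  qed
qed

lemma sgnE_comp:
  assumes s: "\<sigma> \<in> Sn n" and t: "\<tau> \<in> Sn n" and D: "\<Delta> \<subseteq> Kn_edges n"
  shows "sgnE (\<tau> \<circ> \<sigma>) \<Delta> = sgnE \<tau> (gimg \<sigma> \<Delta>) * sgnE \<sigma> \<Delta>"
proof -
  have fin: "finite \<Delta>" using D finite_Kn finite_subset by blast
  have G: "gimg \<sigma> \<Delta> \<subseteq> Kn_edges n" using gimg_Kn[OF s D] .
  have fin2: "finite (gimg \<sigma> \<Delta>)" using G finite_Kn finite_subset by blast
  have inj1: "inj_on (eact \<sigma>) \<Delta>" using eact_inj[OF s] D inj_on_subset by blast
  have inj2: "inj_on (eact \<tau>) (gimg \<sigma> \<Delta>)" using eact_inj[OF t] G inj_on_subset by blast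
  have p1: "permutation (edge_perm \<sigma> \<Delta>)"
    using ep_permutes[OF fin inj1] permutes_imp_permutation by blast
  have p2: "permutation (edge_perm \<tau> (gimg \<sigma> \<Delta>))"
    using ep_permutes[OF fin2 inj2] permutes_imp_permutation by blast
  show ?thesis unfolding sgnE_def ep_comp[OF s t D] using sign_compose[OF p2 p1] .
qed

lemma sign_Sn_comp: "\<sigma> \<in> Sn n \<Longrightarrow> \<tau> \<in> Sn n \<Longrightarrow> sign (\<tau> \<circ> \<sigma>) = sign \<tau> * sign \<sigma>"
  by (meson Sn_perm finite_atLeastAtMost permutes_imp_permutation sign_compose)

definition epsv :: "(nat \<Rightarrow> nat) \<Rightarrow> (nat \<times> nat) set \<Rightarrow> rat" where
  "epsv \<sigma> \<Delta> = of_int (sign \<sigma> * sgnE \<sigma> \<Delta>)"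

lemma epsv_comp:
  assumes s: "\<sigma> \<in> Sn n" and t: "\<tau> \<in> Sn n" and D: "\<Delta> \<subseteq> Kn_edges n"
  shows "epsv (\<tau> \<circ> \<sigma>) \<Delta> = epsv \<tau> (gimg \<sigma> \<Delta>) * epsv \<sigma> \<Delta>"
  unfolding epsv_def sgnE_comp[OF s t D] sign_Sn_comp[OF s t] by simp

lemma epsv_cases: "epsv \<sigma> \<Delta> = 1 \<or> epsv \<sigma> \<Delta> = -1"
  unfolding epsv_def sgnE_def by (cases rule: sign_cases[of \<sigma>]; cases rule: sign_cases[of "edge_perm \<sigma> \<Delta>"]) auto


lemma act_formula:
  assumes s: "\<sigma> \<in> Sn n"
  shows "act n \<sigma> v \<Gamma> = (if \<Gamma> \<subseteq> Kn_edges n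
     then epsv \<sigma> (gimg (inv \<sigma>) \<Gamma>) * v (gimg (inv \<sigma>) \<Gamma>) else 0)"
proof -
  have fin: "finite (Pow (Kn_edges n))" using finite_Kn by simp
  have "act n \<sigma> v \<Gamma> = (\<Sum>\<Delta>\<in>{\<Delta>\<in>Pow (Kn_edges n). gimg \<sigma> \<Delta> = \<Gamma>}. epsv \<sigma> \<Delta> * v \<Delta>)"
    unfolding act_def epsv_def by (simp only: sum.inter_filter[OF fin])
  moreover have "{\<Delta>\<in>Pow (Kn_edges n). gimg \<sigma> \<Delta> = \<Gamma>} =
     (if \<Gamma> \<subseteq> Kn_edges n then {gimg (inv \<sigma>) \<Gamma>} else {})"
  proof (cases "\<Gamma> \<subseteq> Kn_edges n")
    case True
    have "\<Delta> \<in> Pow (Kn_edges n) \<and> gimg \<sigma> \<Delta> = \<Gamma> \<longleftrightarrow> \<Delta> = gimg (inv \<sigma>) \<Gamma>" for \<Delta>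
      using True gimg_inv1[OF s] gimg_inv2[OF s] gimg_Kn[OF inv_Sn[OF s] True] by auto
    then show ?thesis using True by auto
  next
    case False
    then show ?thesis using gimg_Kn[OF s] by auto
  qed
  ultimately show ?thesis by simp
qed

lemma act_gimg:
  assumes s: "\<sigma> \<in> Sn n" and D: "\<Delta> \<subseteq> Kn_edges n"
  shows "act n \<sigma> v (gimg \<sigma> \<Delta>) = epsv \<sigma> \<Delta> * v \<Delta>"
  using act_formula[OF s] gimg_inv1[OF s D] gimg_Kn[OF s D] by simp

lemma act_out: "\<sigma> \<in> Sn n \<Longrightarrow> \<not> \<Gamma> \<subseteq> Kn_edges n \<Longrightarrow> act n \<sigma> v \<Gamma> = 0"
  using act_formula by simp

lemma act_mu:
  assumes s: "\<sigma> \<in> Sn n" and D: "\<Delta> \<subseteq> Kn_edges n"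
  shows "act n \<sigma> (mu \<Delta>) \<Gamma> = (if \<Gamma> = gimg \<sigma> \<Delta> then epsv \<sigma> \<Delta> else 0)"
proof (cases "\<Gamma> \<subseteq> Kn_edges n")
  case True
  have "gimg (inv \<sigma>) \<Gamma> = \<Delta> \<longleftrightarrow> \<Gamma> = gimg \<sigma> \<Delta>"
    using True D gimg_inv1[OF s] gimg_inv2[OF s] by auto
  then show ?thesis using act_formula[OF s, of "mu \<Delta>" \<Gamma>] True by (auto simp: mu_def)
next
  case False
  then show ?thesis using act_out[OF s] gimg_Kn[OF s D] by auto
qed

lemma alpha_eq:
  assumes D: "\<Delta> \<subseteq> Kn_edges n"
  shows "alpha n \<Delta> \<Gamma> = (1 / of_nat (card (stab n \<Delta>))) *
     (\<Sum>\<sigma>\<in>Sn n. if \<Gamma> = gimg \<sigma> \<Delta> then epsv \<sigma> \<Delta> else 0)"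
  unfolding alpha_def using act_mu[OF _ D] by (intro arg_cong[where f="\<lambda>x. _ * x"] sum.cong) auto

lemma alpha_nz:
  assumes D: "\<Delta> \<subseteq> Kn_edges n" and nz: "alpha n \<Delta> \<Gamma> \<noteq> 0"
  shows "\<exists>\<sigma>\<in>Sn n. \<Gamma> = gimg \<sigma> \<Delta>"
proof (rule ccontr)
  assume "\<not> ?thesis"
  then have "(\<Sum>\<sigma>\<in>Sn n. if \<Gamma> = gimg \<sigma> \<Delta> then epsv \<sigma> \<Delta> else 0) = 0"
    by (intro sum.neutral) auto
  then show False using nz alpha_eq[OF D] by simp
qed

lemma stab_fin: "finite (stab n \<Delta>)"
  using finite_Sn by (auto simp: stab_def)

lemma stab_pos: "\<Delta> \<subseteq> Kn_edges n \<Longrightarrow> card (stab n \<Delta>) > 0"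
  using stab_fin[of n \<Delta>] id_Sn[of n] gimg_id[of \<Delta> n]
  by (metis (mono_tags, lifting) card_gt_0_iff empty_iff mem_Collect_eq stab_def)

lemma coset_card:
  assumes s0: "\<sigma>0 \<in> Sn n" and D: "\<Delta> \<subseteq> Kn_edges n"
  shows "card {\<sigma>\<in>Sn n. gimg \<sigma> \<Delta> = gimg \<sigma>0 \<Delta>} = card (stab n \<Delta>)"
proof -
  have p: "\<sigma>0 permutes {1..n}" using s0 by (simp add: Sn_def)
  have inj: "inj_on (\<lambda>\<tau>. \<sigma>0 \<circ> \<tau>) (stab n \<Delta>)"
  proof
    fix a b assume "\<sigma>0 \<circ> a = \<sigma>0 \<circ> b"
    then have "inv \<sigma>0 \<circ> (\<sigma>0 \<circ> a) = inv \<sigma>0 \<circ> (\<sigma>0 \<circ> b)" by simp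
    then show "a = b" by (metis comp_assoc permutes_inv_o(2)[OF p] id_comp)
  qed
  have img: "(\<lambda>\<tau>. \<sigma>0 \<circ> \<tau>) ` stab n \<Delta> = {\<sigma>\<in>Sn n. gimg \<sigma> \<Delta> = gimg \<sigma>0 \<Delta>}"
  proof
    show "(\<lambda>\<tau>. \<sigma>0 \<circ> \<tau>) ` stab n \<Delta> \<subseteq> {\<sigma>\<in>Sn n. gimg \<sigma> \<Delta> = gimg \<sigma>0 \<Delta>}"
      using s0 by (auto simp: stab_def comp_Sn gimg_comp)
    show "{\<sigma>\<in>Sn n. gimg \<sigma> \<Delta> = gimg \<sigma>0 \<Delta>} \<subseteq> (\<lambda>\<tau>. \<sigma>0 \<circ> \<tau>) ` stab n \<Delta>"
    proof
      fix \<sigma> assume "\<sigma> \<in> {\<sigma>\<in>Sn n. gimg \<sigma> \<Delta> = gimg \<sigma>0 \<Delta>}"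
      then have s: "\<sigma> \<in> Sn n" and e: "gimg \<sigma> \<Delta> = gimg \<sigma>0 \<Delta>" by auto
      have "inv \<sigma>0 \<circ> \<sigma> \<in> stab n \<Delta>"
        using comp_Sn[OF inv_Sn[OF s0] s] e gimg_inv1[OF s0 D] by (simp add: stab_def gimg_comp)
      moreover have "\<sigma> = \<sigma>0 \<circ> (inv \<sigma>0 \<circ> \<sigma>)"
        by (simp add: o_assoc permutes_inv_o(1)[OF p])
      ultimately show "\<sigma> \<in> (\<lambda>\<tau>. \<sigma>0 \<circ> \<tau>) ` stab n \<Delta>" by blast
    qed
  qed
  show ?thesis using card_image[OF inj] img by simp
qed


lemma alpha_Hspace: "\<Delta> \<subseteq> Kn_edges n \<Longrightarrow> alpha n \<Delta> \<Gamma> \<noteq> 0 \<Longrightarrow> \<Gamma> \<subseteq> Kn_edges n"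
  using alpha_nz gimg_Kn by blast

lemma alpha_inv:
  assumes t: "\<tau> \<in> Sn n" and D: "\<Delta> \<subseteq> Kn_edges n"
  shows "act n \<tau> (alpha n \<Delta>) \<Gamma> = alpha n \<Delta> \<Gamma>"
proof (cases "\<Gamma> \<subseteq> Kn_edges n")
  case False
  then show ?thesis using act_out[OF t] alpha_Hspace[OF D] by metis
next
  case True
  define G where "G = gimg (inv \<tau>) \<Gamma>"
  have G: "G \<subseteq> Kn_edges n" using gimg_Kn[OF inv_Sn[OF t] True] by (simp add: G_def)
  define c where "c = 1 / (of_nat (card (stab n \<Delta>)) :: rat)"
  define h where "h = (\<lambda>\<sigma>. if \<Gamma> = gimg \<sigma> \<Delta> then epsv \<sigma> \<Delta> else 0)"
  have "act n \<tau> (alpha n \<Delta>) \<Gamma> = epsv \<tau> G * alpha n \<Delta> G"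
    using act_formula[OF t] True by (simp add: G_def)
  also have "\<dots> = c * (\<Sum>\<sigma>\<in>Sn n. epsv \<tau> G * (if G = gimg \<sigma> \<Delta> then epsv \<sigma> \<Delta> else 0))"
    unfolding alpha_eq[OF D] c_def by (simp add: sum_distrib_left)
  also have "(\<Sum>\<sigma>\<in>Sn n. epsv \<tau> G * (if G = gimg \<sigma> \<Delta> then epsv \<sigma> \<Delta> else 0))
      = (\<Sum>\<sigma>\<in>Sn n. h (\<tau> \<circ> \<sigma>))"
  proof (rule sum.cong[OF refl])
    fix \<sigma> assume s: "\<sigma> \<in> Sn n"
    have SD: "gimg \<sigma> \<Delta> \<subseteq> Kn_edges n" using gimg_Kn[OF s D] .
    have iff: "G = gimg \<sigma> \<Delta> \<longleftrightarrow> \<Gamma> = gimg (\<tau> \<circ> \<sigma>) \<Delta>"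
      using gimg_inv1[OF t SD] gimg_inv2[OF t True] by (auto simp: G_def gimg_comp)
    show "epsv \<tau> G * (if G = gimg \<sigma> \<Delta> then epsv \<sigma> \<Delta> else 0) = h (\<tau> \<circ> \<sigma>)"
      unfolding h_def using iff epsv_comp[OF s t D] by auto
  qed
  also have "(\<Sum>\<sigma>\<in>Sn n. h (\<tau> \<circ> \<sigma>)) = (\<Sum>\<sigma>\<in>Sn n. h \<sigma>)"
    unfolding Sn_def using setum_permutations_compose_left[OF Sn_perm[OF t], of h] by simp
  finally show ?thesis unfolding alpha_eq[OF D] c_def h_def by simp
qed

lemma alpha_self:
  assumes sk: "skew_invariant n \<Delta>"
  shows "alpha n \<Delta> \<Delta> = 1"
proof -
  have D: "\<Delta> \<subseteq> Kn_edges n" using sk by (simp add: skew_invariant_def)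
  have "(\<Sum>\<sigma>\<in>Sn n. if \<Delta> = gimg \<sigma> \<Delta> then epsv \<sigma> \<Delta> else 0) = (\<Sum>\<sigma>\<in>stab n \<Delta>. epsv \<sigma> \<Delta>)"
    unfolding stab_def using sum.inter_filter[OF finite_Sn[of n], where P="\<lambda>\<sigma>. gimg \<sigma> \<Delta> = \<Delta>" and g="\<lambda>\<sigma>. epsv \<sigma> \<Delta>"]
    by (simp add: eq_commute)
  also have "\<dots> = (\<Sum>\<sigma>\<in>stab n \<Delta>. 1)"
    using sk by (intro sum.cong) (auto simp: skew_invariant_def stab_def epsv_def)
  finally show ?thesis using alpha_eq[OF D] stab_pos[OF D] by simp
qed

theorem theorem2p21:
  fixes n :: nat and R :: "(nat \<times> nat) set set"
  assumes "n \<ge> 1" and "sgn_reps n R"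
  shows "(\<forall>\<Delta>\<in>R. alpha n \<Delta> \<in> invariants n \<and>
              (\<forall>\<Gamma>. alpha n \<Delta> \<Gamma> \<noteq> 0 \<longrightarrow> card \<Gamma> = card \<Delta>))
       \<and> (\<forall>c :: (nat \<times> nat) set \<Rightarrow> rat.
              (\<lambda>\<Gamma>. \<Sum>\<Delta>\<in>R. c \<Delta> * alpha n \<Delta> \<Gamma>) = (\<lambda>_. 0) \<longrightarrow> (\<forall>\<Delta>\<in>R. c \<Delta> = 0))
       \<and> (\<forall>v\<in>invariants n. \<exists>c :: (nat \<times> nat) set \<Rightarrow> rat.
              v = (\<lambda>\<Gamma>. \<Sum>\<Delta>\<in>R. c \<Delta> * alpha n \<Delta> \<Gamma>))"
proof (intro conjI)
  have skR: "\<And>\<Delta>. \<Delta> \<in> R \<Longrightarrow> skew_invariant n \<Delta>" using assms(2) by (simp add: sgn_reps_def)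
  have DR: "\<And>\<Delta>. \<Delta> \<in> R \<Longrightarrow> \<Delta> \<subseteq> Kn_edges n" using skR by (simp add: skew_invariant_def)
  have finR: "finite R" using DR finite_Kn by (meson PowI finite_Pow_iff finite_subset subsetI)
  have uniq: "\<And>\<Delta> \<Delta>'. \<Delta> \<in> R \<Longrightarrow> \<Delta>' \<in> R \<Longrightarrow> graph_iso n \<Delta> \<Delta>' \<Longrightarrow> \<Delta> = \<Delta>'"
    using assms(2) by (simp add: sgn_reps_def)
  have cover: "\<And>\<Gamma>. skew_invariant n \<Gamma> \<Longrightarrow> \<exists>\<Delta>'\<in>R. graph_iso n \<Gamma> \<Delta>'"
    using assms(2) by (simp add: sgn_reps_def)
  have same: "\<Delta> = \<Delta>'" if "\<Delta> \<in> R" "\<Delta>' \<in> R" "\<sigma> \<in> Sn n" "\<sigma>' \<in> Sn n"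
    "gimg \<sigma> \<Delta> = gimg \<sigma>' \<Delta>'" for \<Delta> \<Delta>' \<sigma> \<sigma>'
  proof -
    have "gimg (inv \<sigma>' \<circ> \<sigma>) \<Delta> = \<Delta>'"
      using that gimg_inv1[OF that(4) DR[OF that(2)]] by (simp add: gimg_comp)
    then have "graph_iso n \<Delta> \<Delta>'" unfolding graph_iso_def
      using comp_Sn[OF inv_Sn[OF that(4)] that(3)] by blast
    then show ?thesis using uniq that by blast
  qed
  show "\<forall>\<Delta>\<in>R. alpha n \<Delta> \<in> invariants n \<and> (\<forall>\<Gamma>. alpha n \<Delta> \<Gamma> \<noteq> 0 \<longrightarrow> card \<Gamma> = card \<Delta>)"
  proof
    fix \<Delta> assume "\<Delta> \<in> R"
    then have D: "\<Delta> \<subseteq> Kn_edges n" by (rule DR)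
    have "alpha n \<Delta> \<in> Hspace n" using alpha_Hspace[OF D] by (auto simp: Hspace_def)
    moreover have "\<forall>\<sigma>\<in>Sn n. act n \<sigma> (alpha n \<Delta>) = alpha n \<Delta>" using alpha_inv[OF _ D] by auto
    moreover have "\<forall>\<Gamma>. alpha n \<Delta> \<Gamma> \<noteq> 0 \<longrightarrow> card \<Gamma> = card \<Delta>"
      using alpha_nz[OF D] card_gimg[OF _ D] by metis
    ultimately show "alpha n \<Delta> \<in> invariants n \<and> (\<forall>\<Gamma>. alpha n \<Delta> \<Gamma> \<noteq> 0 \<longrightarrow> card \<Gamma> = card \<Delta>)"
      by (simp add: invariants_def)
  qed
  have single: "(\<Sum>\<Delta>\<in>R. c \<Delta> * alpha n \<Delta> \<Gamma>) = c \<Delta>0 * alpha n \<Delta>0 \<Gamma>"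
    if "\<Delta>0 \<in> R" "\<sigma>0 \<in> Sn n" "\<Gamma> = gimg \<sigma>0 \<Delta>0" for c \<Delta>0 \<sigma>0 \<Gamma>
  proof -
    have "(\<Sum>\<Delta>\<in>R. c \<Delta> * alpha n \<Delta> \<Gamma>) = c \<Delta>0 * alpha n \<Delta>0 \<Gamma> + (\<Sum>\<Delta>\<in>R - {\<Delta>0}. c \<Delta> * alpha n \<Delta> \<Gamma>)"
      using sum.remove[OF finR that(1)] by simp
    moreover have "(\<Sum>\<Delta>\<in>R - {\<Delta>0}. c \<Delta> * alpha n \<Delta> \<Gamma>) = 0"
    proof (rule sum.neutral, rule ballI)
      fix \<Delta> assume "\<Delta> \<in> R - {\<Delta>0}"
      then have "\<Delta> \<in> R" "\<Delta> \<noteq> \<Delta>0" by auto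
      then have "alpha n \<Delta> \<Gamma> = 0" using alpha_nz[OF DR] same that by metis
      then show "c \<Delta> * alpha n \<Delta> \<Gamma> = 0" by simp
    qed
    ultimately show ?thesis by simp
  qed
  show "\<forall>c :: (nat \<times> nat) set \<Rightarrow> rat.
          (\<lambda>\<Gamma>. \<Sum>\<Delta>\<in>R. c \<Delta> * alpha n \<Delta> \<Gamma>) = (\<lambda>_. 0) \<longrightarrow> (\<forall>\<Delta>\<in>R. c \<Delta> = 0)"
  proof (intro allI impI ballI)
    fix c :: "(nat \<times> nat) set \<Rightarrow> rat" and \<Delta>
    assume z: "(\<lambda>\<Gamma>. \<Sum>\<Delta>\<in>R. c \<Delta> * alpha n \<Delta> \<Gamma>) = (\<lambda>_. 0)" and d: "\<Delta> \<in> R"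
    have "\<Delta> = gimg id \<Delta>" using gimg_id[OF DR[OF d]] by simp
    then have "(\<Sum>\<Delta>'\<in>R. c \<Delta>' * alpha n \<Delta>' \<Delta>) = c \<Delta> * alpha n \<Delta> \<Delta>"
      using single[OF d id_Sn] by blast
    moreover have "(\<Sum>\<Delta>'\<in>R. c \<Delta>' * alpha n \<Delta>' \<Delta>) = 0" using fun_cong[OF z, of \<Delta>] by simp
    ultimately show "c \<Delta> = 0" using alpha_self[OF skR[OF d]] by simp
  qed
  show "\<forall>v\<in>invariants n. \<exists>c :: (nat \<times> nat) set \<Rightarrow> rat.
          v = (\<lambda>\<Gamma>. \<Sum>\<Delta>\<in>R. c \<Delta> * alpha n \<Delta> \<Gamma>)"
  proof
    fix v assume v: "v \<in> invariants n"
    have vH: "\<And>\<Gamma>. v \<Gamma> \<noteq> 0 \<Longrightarrow> \<Gamma> \<subseteq> Kn_edges n" using v by (auto simp: invariants_def Hspace_def)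
    have vI: "\<And>\<sigma>. \<sigma> \<in> Sn n \<Longrightarrow> act n \<sigma> v = v" using v by (auto simp: invariants_def)
    have "v \<Gamma> = (\<Sum>\<Delta>\<in>R. v \<Delta> * alpha n \<Delta> \<Gamma>)" for \<Gamma>
    proof (cases "\<exists>\<Delta>0\<in>R. \<exists>\<sigma>0\<in>Sn n. \<Gamma> = gimg \<sigma>0 \<Delta>0")
      case True
      then obtain \<Delta>0 \<sigma>0 where d0: "\<Delta>0 \<in> R" and s0: "\<sigma>0 \<in> Sn n" and g: "\<Gamma> = gimg \<sigma>0 \<Delta>0" by blast
      have D0: "\<Delta>0 \<subseteq> Kn_edges n" using DR[OF d0] .
      have eq: "epsv \<sigma> \<Delta>0 * v \<Delta>0 = v \<Gamma>" if "\<sigma> \<in> Sn n" "\<Gamma> = gimg \<sigma> \<Delta>0" for \<sigma>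
        using act_gimg[OF that(1) D0, of v] vI[OF that(1)] that(2) by simp
      have "v \<Delta>0 * alpha n \<Delta>0 \<Gamma> = (1 / of_nat (card (stab n \<Delta>0))) *
          (\<Sum>\<sigma>\<in>Sn n. if \<Gamma> = gimg \<sigma> \<Delta>0 then epsv \<sigma> \<Delta>0 * v \<Delta>0 else 0)"
      proof -
        have "v \<Delta>0 * (\<Sum>\<sigma>\<in>Sn n. if \<Gamma> = gimg \<sigma> \<Delta>0 then epsv \<sigma> \<Delta>0 else 0) =
          (\<Sum>\<sigma>\<in>Sn n. if \<Gamma> = gimg \<sigma> \<Delta>0 then epsv \<sigma> \<Delta>0 * v \<Delta>0 else 0)"
          unfolding sum_distrib_left by (intro sum.cong) auto
        then show ?thesis unfolding alpha_eq[OF D0] by (simp add: mult.left_commute)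
      qed
      also have "(\<Sum>\<sigma>\<in>Sn n. if \<Gamma> = gimg \<sigma> \<Delta>0 then epsv \<sigma> \<Delta>0 * v \<Delta>0 else 0)
          = (\<Sum>\<sigma>\<in>Sn n. if gimg \<sigma> \<Delta>0 = gimg \<sigma>0 \<Delta>0 then v \<Gamma> else 0)"
        using eq g by (intro sum.cong) auto
      also have "\<dots> = of_nat (card {\<sigma>\<in>Sn n. gimg \<sigma> \<Delta>0 = gimg \<sigma>0 \<Delta>0}) * v \<Gamma>"
        using sum.inter_filter[OF finite_Sn[of n], where P="\<lambda>\<sigma>. gimg \<sigma> \<Delta>0 = gimg \<sigma>0 \<Delta>0" and g="\<lambda>_. v \<Gamma>"] by simp
      finally have "v \<Delta>0 * alpha n \<Delta>0 \<Gamma> = v \<Gamma>"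
        using coset_card[OF s0 D0] stab_pos[OF D0] by simp
      then show ?thesis using single[OF d0 s0 g] by simp
    next
      case False
      have "(\<Sum>\<Delta>\<in>R. v \<Delta> * alpha n \<Delta> \<Gamma>) = 0"
        using False alpha_nz[OF DR] by (intro sum.neutral) fastforce
      moreover have "v \<Gamma> = 0"
      proof (rule ccontr)
        assume nz: "v \<Gamma> \<noteq> 0"
        then have G: "\<Gamma> \<subseteq> Kn_edges n" by (rule vH)
        have "\<not> skew_invariant n \<Gamma>"
        proof
          assume "skew_invariant n \<Gamma>"
          then obtain \<Delta>' \<sigma> where "\<Delta>' \<in> R" "\<sigma> \<in> Sn n" "gimg \<sigma> \<Gamma> = \<Delta>'"
            using cover unfolding graph_iso_def by blast
          then have "\<Gamma> = gimg (inv \<sigma>) \<Delta>'" using gimg_inv1[OF _ G] by metis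
          then show False using False \<open>\<Delta>' \<in> R\<close> inv_Sn[OF \<open>\<sigma> \<in> Sn n\<close>] by blast
        qed
        then obtain \<sigma> where s: "\<sigma> \<in> Sn n" and fx: "gimg \<sigma> \<Gamma> = \<Gamma>" and ne0: "sign \<sigma> * sgnE \<sigma> \<Gamma> \<noteq> 1"
          using G unfolding skew_invariant_def by auto
        have ne: "epsv \<sigma> \<Gamma> \<noteq> 1" using ne0 unfolding epsv_def by (metis of_int_eq_1_iff)
        then have m: "epsv \<sigma> \<Gamma> = -1" using epsv_cases by blast
        have "v \<Gamma> = epsv \<sigma> \<Gamma> * v \<Gamma>"
          using act_gimg[OF s G, of v] vI[OF s] fx by simp
        then show False using m nz by simp
      qed
      ultimately show ?thesis by simp
    qed
    then show "\<exists>c :: (nat \<times> nat) set \<Rightarrow> rat. v = (\<lambda>\<Gamma>. \<Sum>\<Delta>\<in>R. c \<Delta> * alpha n \<Delta> \<Gamma>)" by blast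
  qed
qed

end
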